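(* Let $m\geq 2$, $\mathcal M=\{1,\dots,m\}$, $X_{\mathcal M}=(X_1,\dots,X_m)$ a discrete memoryless multiple source with finite alphabets, and $\mathcal A\subseteq\mathcal M$ with $|\mathcal A|\geq 2$. Then $C_{\mathrm{SK}}(\mathcal A)=I(\mathcal A)$ if and only if there exist $k$ with $2\leq k\leq|\mathcal A|$, a tuple $(\mathcal C_1,\dots,\mathcal C_k)\in\mathscr P_k(\mathcal A)$, and a rate tuple $R_{\mathcal M}\in\mathscr R(\mathcal A)$ such that $\mathrm{SW}(R_{\mathcal M},\mathcal C_i^c)=0$ for all $i\in\{1,\dots,k\}$.
   Context: Define $\mathscr B(\mathcal A):=\{\mathcal B\subsetneq\mathcal M:\ \mathcal B\neq\emptyset,\ \mathcal B\not\supseteq\mathcal A\}$. Let $h(\mathcal B):=H(X_{\mathcal B}\mid X_{\mathcal B^c})$ for $\mathcal B\subseteq\mathcal M$ (complements in $\mathcal M$; $h(\mathcal M)=H(X_{\mathcal M})$). For $R_{\mathcal M}=(R_1,\dots,R_m)\in\mathbb R^m$ let $\mathrm{SW}(R_{\mathcal M},\mathcal B):=\sum_{j\in\mathcal B}R_j-h(\mathcal B)$, and $\mathscr R(\mathcal A):=\{R_{\mathcal M}\in\mathbb R^m:\ \mathrm{SW}(R_{\mathcal M},\mathcal B)\geq 0\ \forall\,\mathcal B\in\mathscr B(\mathcal A)\}$. Let $R_{\mathrm{CO}}(\mathcal A):=\min_{R_{\mathcal M}\in\mathscr R(\mathcal A)}\sum_i R_i$ and $C_{\mathrm{SK}}(\mathcal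 A):=H(X_{\mathcal M})-R_{\mathrm{CO}}(\mathcal A)$. For $k\geq2$, $\mathscr P_k(\mathcal A)$ is the set of tuples $(\mathcal C_1,\dots,\mathcal C_k)$ of pairwise disjoint subsets of $\mathcal M$ with union $\mathcal M$ and $\mathcal C_i\cap\mathcal A\neq\emptyset$ for all $i$; $I(\mathcal C_1,\dots,\mathcal C_k):=\frac1{k-1}\big(\sum_{i=1}^kH(X_{\mathcal C_i})-H(X_{\mathcal M})\big)$; and $I(\mathcal A):=\min\{I(\mathcal C_1,\dots,\mathcal C_k):2\leq k\leq|\mathcal A|,(\mathcal C_1,\dots,\mathcal C_k)\in\mathscr P_k(\mathcal A)\}$. *)

theory Defs
  imports "HOL-Probability.Probability_Mass_Function" "HOL-Library.FuncSet"
begin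

(* The source X_M = (X_1,...,X_m) is given by its joint (single-letter) distribution
   P :: (nat => 'a) pmf; a sample x gives X_i = x i for i in M = {1..m}. *)

definition Mset :: "nat \<Rightarrow> nat set" where
  "Mset m = {1..m}"

definition marg :: "(nat \<Rightarrow> 'a) pmf \<Rightarrow> nat set \<Rightarrow> (nat \<Rightarrow> 'a) pmf" where
  "marg P B = map_pmf (\<lambda>x. restrict x B) P"

definition ent :: "(nat \<Rightarrow> 'a) pmf \<Rightarrow> nat set \<Rightarrow> real" where
  "ent P B = (\<Sum>y\<in>set_pmf (marg P B). - pmf (marg P B) y * log 2 (pmf (marg P B) y))"

(* h(B) = H(X_B | X_{B^c}) = H(X_M) - H(X_{M - B}) *)
definition hc :: "nat \<Rightarrow> (nat \<Rightarrow> 'a) pmf \<Rightarrow> nat set \<Rightarrow> real" where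
  "hc m P B = ent P (Mset m) - ent P (Mset m - B)"

definition Bfam :: "nat \<Rightarrow> nat set \<Rightarrow> nat set set" where
  "Bfam m A = {B. B \<subset> Mset m \<and> B \<noteq> {} \<and> \<not> A \<subseteq> B}"

definition SW :: "nat \<Rightarrow> (nat \<Rightarrow> 'a) pmf \<Rightarrow> (nat \<Rightarrow> real) \<Rightarrow> nat set \<Rightarrow> real" where
  "SW m P R B = (\<Sum>j\<in>B. R j) - hc m P B"

(* rate tuples R_M are functions nat => real; only the values on M matter *)
definition Rreg :: "nat \<Rightarrow> (nat \<Rightarrow> 'a) pmf \<Rightarrow> nat set \<Rightarrow> (nat \<Rightarrow> real) set" where
  "Rreg m P A = {R. \<forall>B\<in>Bfam m A. SW m P R B \<ge> 0}"

definition R_CO :: "nat \<Rightarrow> (nat \<Rightarrow> 'a) pmf \<Rightarrow> nat set \<Rightarrow> real" where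
  "R_CO m P A = Inf ((\<lambda>R. \<Sum>i\<in>Mset m. R i) ` Rreg m P A)"

definition C_SK :: "nat \<Rightarrow> (nat \<Rightarrow> 'a) pmf \<Rightarrow> nat set \<Rightarrow> real" where
  "C_SK m P A = ent P (Mset m) - R_CO m P A"

(* tuples (C_1,...,C_k) represented by C :: nat => nat set, indices 1..k *)
definition Pk :: "nat \<Rightarrow> nat \<Rightarrow> nat set \<Rightarrow> (nat \<Rightarrow> nat set) set" where
  "Pk m k A = {C. (\<forall>i\<in>{1..k}. \<forall>j\<in>{1..k}. i \<noteq> j \<longrightarrow> C i \<inter> C j = {})
                 \<and> (\<Union>i\<in>{1..k}. C i) = Mset m
                 \<and> (\<forall>i\<in>{1..k}. C i \<subseteq> Mset m \<and> C i \<inter> A \<noteq> {})}"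

definition Ipart :: "nat \<Rightarrow> (nat \<Rightarrow> 'a) pmf \<Rightarrow> nat \<Rightarrow> (nat \<Rightarrow> nat set) \<Rightarrow> real" where
  "Ipart m P k C = ((\<Sum>i\<in>{1..k}. ent P (C i)) - ent P (Mset m)) / (real k - 1)"

definition I_A :: "nat \<Rightarrow> (nat \<Rightarrow> 'a) pmf \<Rightarrow> nat set \<Rightarrow> real" where
  "I_A m P A = Inf {Ipart m P k C | k C. 2 \<le> k \<and> k \<le> card A \<and> C \<in> Pk m k A}"

end

theory Submission imports Defs "HOL-Analysis.Analysis" begin

lemma finite_M[simp]: "finite (Mset m)" by (simp add: Mset_def)

lemma Pk_sub: "C \<in> Pk m k A \<Longrightarrow> i \<in> {1..k} \<Longrightarrow> C i \<subseteq> Mset m"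
  by (simp add: Pk_def)

lemma sum_partition:
  assumes C: "C \<in> Pk m k A"
  shows "(\<Sum>i\<in>{1..k}. \<Sum>j\<in>Mset m - C i. R j) = (real k - 1) * (\<Sum>j\<in>Mset m. (R j::real))"
proof -
  have sub: "\<And>i. i \<in> {1..k} \<Longrightarrow> C i \<subseteq> Mset m" using C Pk_sub by blast
  have fin: "\<And>i. i \<in> {1..k} \<Longrightarrow> finite (C i)" using sub finite_subset finite_M by blast
  have "(\<Sum>i\<in>{1..k}. \<Sum>j\<in>Mset m - C i. R j) = (\<Sum>i\<in>{1..k}. (\<Sum>j\<in>Mset m. R j) - (\<Sum>j\<in>C i. R j))"
    by (rule sum.cong) (auto simp: sum_diff sub)
  also have "\<dots> = real k * (\<Sum>j\<in>Mset m. R j) - (\<Sum>i\<in>{1..k}. \<Sum>j\<in>C i. R j)"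
    by (simp add: sum_subtractf)
  also have "(\<Sum>i\<in>{1..k}. \<Sum>j\<in>C i. R j) = (\<Sum>j\<in>(\<Union>i\<in>{1..k}. C i). R j)"
    by (rule sum.UNION_disjoint[symmetric]) (use fin C in \<open>auto simp: Pk_def\<close>)
  also have "(\<Union>i\<in>{1..k}. C i) = Mset m" using C by (simp add: Pk_def)
  also have "real k * (\<Sum>j\<in>Mset m. R j) - (\<Sum>j\<in>Mset m. R j) = (real k - 1) * (\<Sum>j\<in>Mset m. R j)"
    by (simp add: algebra_simps)
  finally show ?thesis .
qed

lemma SW_sum:
  assumes C: "C \<in> Pk m k A" and k: "k \<ge> 2"
  shows "(\<Sum>i\<in>{1..k}. SW m P R (Mset m - C i)) = (real k - 1) * ((\<Sum>j\<in>Mset m. R j) - ent P (Mset m) + Ipart m P k C)"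
proof -
  have sub: "\<And>i. i \<in> {1..k} \<Longrightarrow> Mset m - (Mset m - C i) = C i" using C Pk_sub by blast
  have "(\<Sum>i\<in>{1..k}. SW m P R (Mset m - C i)) = (\<Sum>i\<in>{1..k}. (\<Sum>j\<in>Mset m - C i. R j) - ent P (Mset m) + ent P (C i))"
    by (rule sum.cong) (auto simp: SW_def hc_def sub)
  also have "\<dots> = (\<Sum>i\<in>{1..k}. (\<Sum>j\<in>Mset m - C i. R j)) - (\<Sum>i\<in>{1..k}. ent P (Mset m)) + (\<Sum>i\<in>{1..k}. ent P (C i))"
    by (simp only: sum.distrib sum_subtractf)
  also have "(\<Sum>i\<in>{1..k}. (\<Sum>j\<in>Mset m - C i. R j)) = (real k - 1) * (\<Sum>j\<in>Mset m. R j)"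
    by (rule sum_partition[OF C])
  also have "(\<Sum>i\<in>{1..k}. ent P (Mset m)) = real k * ent P (Mset m)" by simp
  finally have e1: "(\<Sum>i\<in>{1..k}. SW m P R (Mset m - C i)) = (real k - 1) * (\<Sum>j\<in>Mset m. R j) - real k * ent P (Mset m) + (\<Sum>i\<in>{1..k}. ent P (C i))" .
  have "(real k - 1) * Ipart m P k C = (\<Sum>i\<in>{1..k}. ent P (C i)) - ent P (Mset m)"
    using k unfolding Ipart_def by simp
  with e1 show ?thesis by (simp add: algebra_simps)
qed

lemma compl_Bfam:
  assumes C: "C \<in> Pk m k A" and k: "k \<ge> 2" and i: "i \<in> {1..k}"
  shows "Mset m - C i \<in> Bfam m A"
proof -
  obtain j where j: "j \<in> {1..k}" "j \<noteq> i"
  proof (cases "i = 1")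
    case True thus ?thesis using k by (intro that[of 2]) auto
  next
    case False thus ?thesis using k i by (intro that[of 1]) auto
  qed
  have "C j \<inter> A \<noteq> {}" "C j \<subseteq> Mset m" "C i \<inter> C j = {}" "C i \<inter> A \<noteq> {}" "C i \<subseteq> Mset m"
    using C i j by (auto simp: Pk_def)
  thus ?thesis unfolding Bfam_def by blast
qed

lemma lower:
  assumes C: "C \<in> Pk m k A" and k: "k \<ge> 2" and R: "R \<in> Rreg m P A"
  shows "(\<Sum>j\<in>Mset m. R j) \<ge> ent P (Mset m) - Ipart m P k C"
proof -
  have "0 \<le> (\<Sum>i\<in>{1..k}. SW m P R (Mset m - C i))"
    using R compl_Bfam[OF C k] by (auto simp: Rreg_def intro!: sum_nonneg)
  hence "0 \<le> (real k - 1) * ((\<Sum>j\<in>Mset m. R j) - ent P (Mset m) + Ipart m P k C)"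
    by (metis SW_sum[OF C k])
  moreover have "real k - 1 > 0" using k by simp
  ultimately show ?thesis by (simp add: zero_le_mult_iff)
qed


lemma Rreg_nonempty:
  "\<exists>R. R \<in> Rreg m P A"
proof -
  define c where "c = (\<Sum>B\<in>Pow (Mset m). \<bar>hc m P B\<bar>)"
  have c0: "c \<ge> 0" unfolding c_def by (rule sum_nonneg) simp
  have "(\<lambda>_. c) \<in> Rreg m P A"
    unfolding Rreg_def
  proof (rule CollectI, rule ballI)
    fix B assume B: "B \<in> Bfam m A"
    hence Bs: "B \<subseteq> Mset m" "B \<noteq> {}" by (auto simp: Bfam_def)
    hence fB: "finite B" using finite_subset finite_M by blast
    hence cB: "card B \<ge> 1" using Bs(2) by (simp add: Suc_le_eq card_gt_0_iff)
    have "hc m P B \<le> \<bar>hc m P B\<bar>" by (rule abs_ge_self)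
    also have "\<dots> \<le> c" unfolding c_def
      by (rule member_le_sum) (use Bs in auto)
    also have "c \<le> real (card B) * c"
      using mult_right_mono[of 1 "real (card B)" c] c0 cB by simp
    finally have "hc m P B \<le> real (card B) * c" .
    moreover have "SW m P (\<lambda>_. c) B = real (card B) * c - hc m P B"
      unfolding SW_def by simp
    ultimately show "0 \<le> SW m P (\<lambda>_. c) B" by linarith
  qed
  thus ?thesis by blast
qed

lemma zero_out:
  assumes "R \<in> Rreg m P A"
  shows "(\<lambda>j. if j \<in> Mset m then R j else 0) \<in> Rreg m P A"
    "(\<Sum>j\<in>Mset m. (if j \<in> Mset m then R j else 0)) = (\<Sum>j\<in>Mset m. R j)"
proof -
  have "\<And>B. B \<in> Bfam m A \<Longrightarrow> SW m P (\<lambda>j. if j \<in> Mset m then R j else 0) B = SW m P R B"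
    unfolding SW_def Bfam_def by (auto intro!: sum.cong)
  thus "(\<lambda>j. if j \<in> Mset m then R j else 0) \<in> Rreg m P A" using assms by (simp add: Rreg_def)
qed simp

lemma singleton_Bfam:
  assumes "m \<ge> 2" "card A \<ge> 2" "j \<in> Mset m"
  shows "{j} \<in> Bfam m A"
proof -
  have "card (Mset m) \<ge> 2" using assms by (simp add: Mset_def)
  hence "Mset m \<noteq> {j}" by auto
  moreover have "\<not> A \<subseteq> {j}"
  proof
    assume "A \<subseteq> {j}"
    hence "card A \<le> card {j}" by (intro card_mono) auto
    thus False using assms by simp
  qed
  ultimately show ?thesis using assms unfolding Bfam_def by auto
qed

lemma bdd_RCO:
  assumes "C \<in> Pk m k A" "k \<ge> 2"
  shows "bdd_below ((\<lambda>R. \<Sum>i\<in>Mset m. R i) ` Rreg m P A)"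
  using lower[OF assms] by (intro bdd_belowI[where m="ent P (Mset m) - Ipart m P k C"]) auto

lemma attain:
  assumes m: "m \<ge> 2" and cA: "card A \<ge> 2" and C: "C \<in> Pk m k A" "k \<ge> 2"
  shows "\<exists>R\<in>Rreg m P A. (\<Sum>i\<in>Mset m. R i) = R_CO m P A"
proof -
  define M where "M = Mset m"
  define S where "S = (\<lambda>R::nat\<Rightarrow>real. \<Sum>i\<in>M. R i)"
  define r where "r = R_CO m P A"
  define a where "a = - (\<Sum>i\<in>M. \<bar>hc m P {i}\<bar>)"
  define b where "b = r + 1 + (\<Sum>i\<in>M. \<bar>hc m P {i}\<bar>)"
  define K where "K = PiE UNIV (\<lambda>j. if j \<in> M then {a..b} else {0::real})"
  define G where "G = (\<Inter>B\<in>Bfam m A. {R. hc m P B \<le> (\<Sum>j\<in>B. R j)}) \<inter> {R. S R \<le> r + 1}"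
  define F where "F = K \<inter> G"
  have fM: "finite M" by (simp add: M_def)
  have bdd: "bdd_below (S ` Rreg m P A)" using bdd_RCO[OF C] by (simp add: S_def M_def)
  have ne: "Rreg m P A \<noteq> {}" using Rreg_nonempty by blast
  have r_def': "r = Inf (S ` Rreg m P A)" by (simp add: r_def R_CO_def S_def M_def)
  have cK: "compact K"
  proof -
    have "compactin (product_topology (\<lambda>i. euclidean) UNIV) K"
      unfolding K_def by (subst compactin_PiE) auto
    thus ?thesis by (simp add: euclidean_product_topology)
  qed
  have contB: "continuous_on UNIV (\<lambda>R::nat\<Rightarrow>real. \<Sum>j\<in>B. R j)" for B
    by (rule continuous_on_sum) (rule continuous_on_product_coordinates)
  have contS: "continuous_on UNIV S" unfolding S_def by (rule contB)
  have clF: "closed G" unfolding G_def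
    by (intro closed_Int closed_INT ballI closed_Collect_le continuous_on_const contB contS)
  have cF: "compact F" unfolding F_def using cK clF
    by (rule compact_Int_closed)
  have inF: "(\<lambda>j. if j \<in> M then R j else 0) \<in> F \<and> S (\<lambda>j. if j \<in> M then R j else 0) = S R"
    if R: "R \<in> Rreg m P A" "S R \<le> r + 1" for R
  proof -
    define R' where "R' = (\<lambda>j. if j \<in> M then R j else 0)"
    have R': "R' \<in> Rreg m P A" "S R' = S R" using zero_out[OF R(1)] by (simp_all add: R'_def S_def M_def)
    have lo: "R i \<ge> hc m P {i}" if "i \<in> M" for i
      using R(1) singleton_Bfam[OF m cA, of i] that by (auto simp: Rreg_def SW_def M_def)
    have "R' \<in> K"
    proof -
      have "R j \<in> {a..b}" if j: "j \<in> M" for j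
      proof -
        have "\<bar>hc m P {j}\<bar> \<le> (\<Sum>i\<in>M. \<bar>hc m P {i}\<bar>)"
          by (rule member_le_sum) (use j fM in auto)
        hence 1: "a \<le> R j" using lo[OF j] unfolding a_def by linarith
        have "S R = R j + (\<Sum>i\<in>M - {j}. R i)" unfolding S_def using j fM
          by (simp add: sum.remove)
        moreover have "(\<Sum>i\<in>M - {j}. hc m P {i}) \<le> (\<Sum>i\<in>M - {j}. R i)"
          by (rule sum_mono) (use lo in auto)
        moreover have "- (\<Sum>i\<in>M - {j}. hc m P {i}) \<le> (\<Sum>i\<in>M - {j}. \<bar>hc m P {i}\<bar>)"
          by (rule order_trans[OF abs_ge_minus_self sum_abs])
        moreover have "(\<Sum>i\<in>M - {j}. \<bar>hc m P {i}\<bar>) \<le> (\<Sum>i\<in>M. \<bar>hc m P {i}\<bar>)"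
          by (rule sum_mono2) (use fM in auto)
        ultimately have "R j \<le> b" using R(2) unfolding b_def by linarith
        with 1 show ?thesis by simp
      qed
      thus ?thesis unfolding K_def R'_def by auto
    qed
    moreover have "R' \<in> (\<Inter>B\<in>Bfam m A. {R. hc m P B \<le> (\<Sum>j\<in>B. R j)})"
      using R'(1) by (auto simp: Rreg_def SW_def)
    ultimately show ?thesis using R'(2) R(2) unfolding F_def G_def R'_def by auto
  qed
  have FR: "F \<subseteq> Rreg m P A" unfolding F_def G_def Rreg_def SW_def by auto
  obtain R1 where R1: "R1 \<in> Rreg m P A" "S R1 < r + 1"
    using cInf_lessD[of "S ` Rreg m P A" "r+1"] ne unfolding r_def'[symmetric] by auto
  have Fne: "F \<noteq> {}" using inF[OF R1(1)] R1(2) by auto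
  obtain R0 where R0: "R0 \<in> F" "\<And>R. R \<in> F \<Longrightarrow> S R0 \<le> S R"
    using continuous_attains_inf[OF cF Fne continuous_on_subset[OF contS subset_UNIV]] by blast
  have "S R0 = r"
  proof (rule antisym)
    show "r \<le> S R0" unfolding r_def' using FR R0(1) bdd by (auto intro: cInf_lower)
    show "S R0 \<le> r"
    proof (rule ccontr)
      assume "\<not> S R0 \<le> r"
      then obtain R2 where R2: "R2 \<in> Rreg m P A" "S R2 < min (S R0) (r + 1)"
        using cInf_lessD[of "S ` Rreg m P A" "min (S R0) (r+1)"] ne unfolding r_def'[symmetric] by auto
      with inF[OF R2(1)] R0(2) show False by force
    qed
  qed
  thus ?thesis using FR R0(1) by (auto simp: S_def M_def r_def)
qed

theorem proposition1:
  fixes m :: nat and P :: "(nat \<Rightarrow> 'a) pmf" and A :: "nat set"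
  assumes "m \<ge> 2"
    and "finite (set_pmf P)"
    and "A \<subseteq> Mset m"
    and "card A \<ge> 2"
  shows "C_SK m P A = I_A m P A \<longleftrightarrow>
    (\<exists>k C R. 2 \<le> k \<and> k \<le> card A \<and> C \<in> Pk m k A \<and> R \<in> Rreg m P A \<and>
       (\<forall>i\<in>{1..k}. SW m P R (Mset m - C i) = 0))"
proof -
  define M where "M = Mset m"
  define V where "V = {Ipart m P k C | k C. 2 \<le> k \<and> k \<le> card A \<and> C \<in> Pk m k A}"
  have IA: "I_A m P A = Inf V" by (simp add: I_A_def V_def)
  obtain a where a: "a \<in> A" using assms(4) by fastforce
  have "A - {a} \<noteq> {}"
  proof
    assume "A - {a} = {}" hence "A \<subseteq> {a}" by auto
    hence "card A \<le> card {a}" by (intro card_mono) auto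
    thus False using assms(4) by simp
  qed
  define C0 where "C0 = (\<lambda>i::nat. if i = 1 then {a} else Mset m - {a})"
  have C0: "C0 \<in> Pk m 2 A"
  proof -
    have "{1..2::nat} = {1,2}" by auto
    moreover have "a \<in> Mset m" using a assms(3) by auto
    ultimately show ?thesis unfolding Pk_def C0_def using a \<open>A - {a} \<noteq> {}\<close> assms(3) by auto
  qed
  have Vne: "V \<noteq> {}" unfolding V_def using C0 assms(4) by blast
  have Vfin: "finite V"
  proof -
    have "V \<subseteq> (\<lambda>(k,D). Ipart m P k D) ` (SIGMA k:{2..card A}. PiE {1..k} (\<lambda>_. Pow M))"
    proof
      fix v assume "v \<in> V"
      then obtain k C where kC: "v = Ipart m P k C" "2 \<le> k" "k \<le> card A" "C \<in> Pk m k A"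
        unfolding V_def by blast
      have "Ipart m P k (restrict C {1..k}) = Ipart m P k C" unfolding Ipart_def by simp
      moreover have "restrict C {1..k} \<in> PiE {1..k} (\<lambda>_. Pow M)"
        using Pk_sub[OF kC(4)] by (auto simp: M_def)
      moreover have "(k, restrict C {1..k}) \<in> (SIGMA k:{2..card A}. PiE {1..k} (\<lambda>_. Pow M))"
        using kC \<open>restrict C {1..k} \<in> PiE {1..k} (\<lambda>_. Pow M)\<close> by simp
      ultimately show "v \<in> (\<lambda>(k,D). Ipart m P k D) ` (SIGMA k:{2..card A}. PiE {1..k} (\<lambda>_. Pow M))"
        using kC(1) by (intro image_eqI[where x="(k, restrict C {1..k})"]) auto
    qed
    moreover have "finite (SIGMA k:{2..card A}. PiE {1..k} (\<lambda>_. Pow M))"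
      by (intro finite_SigmaI finite_PiE) (auto simp: M_def)
    ultimately show ?thesis using finite_subset by blast
  qed
  have IAmin: "I_A m P A = Min V" using IA cInf_eq_Min[OF Vfin Vne] by simp
  obtain k0 C0' where k0: "I_A m P A = Ipart m P k0 C0'" "2 \<le> k0" "k0 \<le> card A" "C0' \<in> Pk m k0 A"
    using Min_in[OF Vfin Vne] unfolding IAmin V_def by blast
  have IAle: "I_A m P A \<le> Ipart m P k C" if "2 \<le> k" "k \<le> card A" "C \<in> Pk m k A" for k C
    unfolding IAmin by (rule Min_le[OF Vfin]) (use that V_def in blast)
  have Rne: "Rreg m P A \<noteq> {}" using Rreg_nonempty by blast
  have bdd: "bdd_below ((\<lambda>R. \<Sum>i\<in>Mset m. R i) ` Rreg m P A)" using bdd_RCO[OF C0] by simp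
  have RCOge: "R_CO m P A \<ge> ent P (Mset m) - Ipart m P k0 C0'"
    unfolding R_CO_def using Rne lower[OF k0(4) k0(2)] by (auto intro!: cInf_greatest)
  have CSKle: "C_SK m P A \<le> I_A m P A" using RCOge k0(1) by (simp add: C_SK_def)
  show ?thesis
  proof
    assume eq: "C_SK m P A = I_A m P A"
    obtain R where R: "R \<in> Rreg m P A" "(\<Sum>i\<in>Mset m. R i) = R_CO m P A"
      using attain[OF assms(1) assms(4) C0] by auto
    have "(\<Sum>i\<in>Mset m. R i) = ent P (Mset m) - Ipart m P k0 C0'"
      using R(2) eq k0(1) by (simp add: C_SK_def)
    hence s0: "(\<Sum>i\<in>{1..k0}. SW m P R (Mset m - C0' i)) = 0"
      unfolding SW_sum[OF k0(4) k0(2)] by simp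
    have nn: "\<forall>i\<in>{1..k0}. 0 \<le> SW m P R (Mset m - C0' i)"
      using R(1) compl_Bfam[OF k0(4) k0(2)] by (auto simp: Rreg_def)
    have "\<forall>i\<in>{1..k0}. SW m P R (Mset m - C0' i) = 0"
      using sum_nonneg_eq_0_iff[of "{1..k0}" "\<lambda>i. SW m P R (Mset m - C0' i)"] s0 nn by auto
    thus "\<exists>k C R. 2 \<le> k \<and> k \<le> card A \<and> C \<in> Pk m k A \<and> R \<in> Rreg m P A \<and>
       (\<forall>i\<in>{1..k}. SW m P R (Mset m - C i) = 0)" using k0 R(1) by blast
  next
    assume "\<exists>k C R. 2 \<le> k \<and> k \<le> card A \<and> C \<in> Pk m k A \<and> R \<in> Rreg m P A \<and>
       (\<forall>i\<in>{1..k}. SW m P R (Mset m - C i) = 0)"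
    then obtain k C R where kC: "2 \<le> k" "k \<le> card A" "C \<in> Pk m k A" "R \<in> Rreg m P A"
       "\<forall>i\<in>{1..k}. SW m P R (Mset m - C i) = 0" by blast
    have "(\<Sum>i\<in>{1..k}. SW m P R (Mset m - C i)) = 0" using kC(5) by simp
    hence "(real k - 1) * ((\<Sum>j\<in>Mset m. R j) - ent P (Mset m) + Ipart m P k C) = 0"
      by (metis SW_sum[OF kC(3) kC(1)])
    moreover have "real k - 1 \<noteq> 0" using kC(1) by simp
    ultimately have sR: "(\<Sum>j\<in>Mset m. R j) = ent P (Mset m) - Ipart m P k C" by simp
    have "R_CO m P A \<le> (\<Sum>j\<in>Mset m. R j)" unfolding R_CO_def
      by (rule cInf_lower[OF _ bdd]) (use kC(4) in auto)
    hence "C_SK m P A \<ge> Ipart m P k C" using sR by (simp add: C_SK_def)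
    moreover have "I_A m P A \<le> Ipart m P k C" using IAle kC by blast
    ultimately show "C_SK m P A = I_A m P A" using CSKle IAle[OF kC(1-3)] by linarith
  qed
qed

end
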